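(* Consider two quantum images, a carrier and an embedder, and a fixed pixel position $j$, whose true phases are $\varphi_j$ (carrier) and $\theta_j$ (embedder). Suppose the phases are estimated by covariant phase measurements in two independent physical systems with number operators $N_1$ and $N_2$ respectively, giving estimates $\varphi_j'$ and $\theta_j'$ with phase uncertainties $\Delta_M\{\varphi\}$ and $\Delta_M\{\theta\}$. Then the joint uncertainty of the synthesized pixel satisfies $$\tanh\big(\Delta_M\{\varphi\}\cdot\Delta N_1+\Delta_M\{\theta\}\cdot\Delta N_2\big)+\Delta_M\{\varphi\}\cdot\Delta N_1\ \ge\ \tanh(1)+\tfrac12 ,$$ i.e. its lower bound is $\tanh(1)+\frac12$.
   Context: A quantum image is represented as $|I(\{\theta_j\})\rangle=\frac{1}{2^n}\sum_{j=0}^{2^{2n}-1}(|0\rangle+e^{i\theta_j}|1\rangle)\otimes|j\rangle$ with $\theta_j\in(0,\pi/2)$ the grey level at position $j$. The synthesized pixel at position $j$ has phase $\frac{\pi}{2}\tanh(\theta_j'+\varphi_j')+\delta_j$ with $\delta_j=\varphi_j-\varphi_j'$. For a Hilbert space with orthonormal basis $\{|n\rangle:n\ge0\}$, the number operator is $N=\sum_{n\ge0}n|n\rangle\langle n|$; for a state $|\phi\rangle$, $\bar N=\langle\phi|N|\phi\rangle$ and $\Delta N=\|(N-\bar N)|\phi\rangle\|^2$. For a phase measurement $M$ with outcome distribution $P(d\varphi)$ on $(-\pi,\pi)$, $E\{e^{i\varphi}\}=\int e^{i\varphi}P(d\varphi)$, $D\{e^{i\varphi}\}=\int|e^{i\varphi}-E\{e^{i\varphi}\}|^2P(d\varphi)$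 and $\Delta_M\{\varphi\}^2=D\{e^{i\varphi}\}/|E\{e^{i\varphi}\}|^2$. A covariant measurement is one of the form $M(d\varphi)=e^{iN\varphi}P_0e^{-iN\varphi}\frac{d\varphi}{2\pi}$ with $P_0\ge0$; for such measurements Holevo's uncertainty relation $\Delta_M\{\varphi\}\cdot\Delta N\ge\frac12$ holds. *)

theory Defs
  imports "HOL-Analysis.Analysis"
begin

text \<open>A pure state of a single-mode system, written in the number basis |n>:
  amplitudes c n, normalised, and in the domain of the number operator N
  (so that its uncertainty is finite).\<close>
definition is_state :: "(nat \<Rightarrow> complex) \<Rightarrow> bool" where
  "is_state c \<longleftrightarrow> ((\<lambda>n. (cmod (c n))\<^sup>2) sums 1) \<and>
                   summable (\<lambda>n. (real n)\<^sup>2 * (cmod (c n))\<^sup>2)"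

definition num_mean :: "(nat \<Rightarrow> complex) \<Rightarrow> real" where
  "num_mean c = (\<Sum>n. real n * (cmod (c n))\<^sup>2)"

definition num_unc :: "(nat \<Rightarrow> complex) \<Rightarrow> real" where
  "num_unc c = sqrt (\<Sum>n. (real n - num_mean c)\<^sup>2 * (cmod (c n))\<^sup>2)"

text \<open>Seed operator P0 (matrix in the number basis) of a covariant phase
  measurement  M(d phi) = e^{iN phi} P0 e^{-iN phi} d phi / 2 pi :
  P0 is positive semidefinite, and the normalisation  int M = I  forces
  diagonal entries equal to 1.\<close>
definition covariant_seed :: "(nat \<Rightarrow> nat \<Rightarrow> complex) \<Rightarrow> bool" where
  "covariant_seed P0 \<longleftrightarrow> (\<forall>n. P0 n n = 1) \<and>
     (\<forall>K (v :: nat \<Rightarrow> complex).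
        Im (\<Sum>m<K. \<Sum>n<K. cnj (v m) * P0 m n * v n) = 0 \<and>
        Re (\<Sum>m<K. \<Sum>n<K. cnj (v m) * P0 m n * v n) \<ge> 0)"

text \<open>P is the outcome distribution  P(d phi) = <c|M(d phi)|c>  of the covariant
  measurement with seed P0 in state c: a Borel probability measure on (-pi,pi)
  whose Fourier coefficients are those prescribed by the Born rule,
  int e^{ik phi} P(d phi) = sum_m conj(c m) P0 m (m+k) c (m+k)  (k >= 0;
  negative k follow by conjugation). These determine P uniquely.\<close>
definition phase_outcome_dist ::
  "(nat \<Rightarrow> complex) \<Rightarrow> (nat \<Rightarrow> nat \<Rightarrow> complex) \<Rightarrow> real measure \<Rightarrow> bool" where
  "phase_outcome_dist c P0 P \<longleftrightarrow>
     emeasure P (space P) = 1 \<and> sets P = sets (borel :: real measure) \<and>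
     (AE \<phi> in P. - pi < \<phi> \<and> \<phi> < pi) \<and>
     (\<forall>k::nat. (\<lambda>m. cnj (c m) * P0 m (m + k) * c (m + k))
                 sums (integral\<^sup>L P (\<lambda>\<phi>. cis (real k * \<phi>))))"

definition phase_mean :: "real measure \<Rightarrow> complex" where
  "phase_mean P = integral\<^sup>L P (\<lambda>\<phi>. cis \<phi>)"

definition phase_disp :: "real measure \<Rightarrow> real" where
  "phase_disp P = integral\<^sup>L P (\<lambda>\<phi>. (cmod (cis \<phi> - phase_mean P))\<^sup>2)"

definition phase_unc :: "real measure \<Rightarrow> real" where
  "phase_unc P = sqrt (phase_disp P / (cmod (phase_mean P))\<^sup>2)"

end

theory Submission
  imports Defs
begin


lemma quad_discr:
  fixes F B G :: real
  assumes "\<And>t. 0 \<le> t^2 * F - 2 * t * B + G" "F \<ge> 0"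
  shows "B^2 \<le> F * G"
proof (cases "F = 0")
  case True
  have "B = 0"
  proof (rule ccontr)
    assume "B \<noteq> 0"
    have "0 \<le> ((G+1)/(2*B))^2 * F - 2 * ((G+1)/(2*B)) * B + G" by (rule assms(1))
    with True \<open>B\<noteq>0\<close> show False by (simp add: field_simps)
  qed
  then show ?thesis using True by simp
next
  case False
  hence "F > 0" using assms(2) by simp
  have "0 \<le> (B/F)^2 * F - 2 * (B/F) * B + G" by (rule assms(1))
  hence "0 \<le> (B^2 - 2*B^2 + G*F)/F" using \<open>F>0\<close> by (simp add: field_simps power2_eq_square)
  hence "0 \<le> G*F - B^2" using \<open>F>0\<close> by (simp add: zero_le_divide_iff)
  thus ?thesis by (simp add: algebra_simps)
qed

lemma cs_summable:
  fixes f g :: "nat \<Rightarrow> real"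
  assumes "summable (\<lambda>n. (f n)^2)" "summable (\<lambda>n. (g n)^2)"
  shows "summable (\<lambda>n. f n * g n)"
proof (rule summable_comparison_test'[where g="\<lambda>n. ((f n)^2 + (g n)^2)/2"])
  show "summable (\<lambda>n. ((f n)^2 + (g n)^2)/2)"
    using assms by (intro summable_divide summable_add)
  fix n show "norm (f n * g n) \<le> ((f n)^2 + (g n)^2)/2"
  proof -
    have "0 \<le> (\<bar>f n\<bar> - \<bar>g n\<bar>)^2" by simp
    hence "2 * (\<bar>f n\<bar> * \<bar>g n\<bar>) \<le> \<bar>f n\<bar>^2 + \<bar>g n\<bar>^2"
      by (simp add: power2_diff)
    thus ?thesis by (simp add: abs_mult)
  qed
qed

lemma cs_ineq:
  fixes f g :: "nat \<Rightarrow> real"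
  assumes "summable (\<lambda>n. (f n)^2)" "summable (\<lambda>n. (g n)^2)"
  shows "(\<Sum>n. f n * g n)^2 \<le> (\<Sum>n. (f n)^2) * (\<Sum>n. (g n)^2)"
proof (rule quad_discr)
  have sfg: "summable (\<lambda>n. f n * g n)" using cs_summable[OF assms] .
  fix t :: real
  have "(\<lambda>n. (t * f n - g n)^2) = (\<lambda>n. t^2 * (f n)^2 - 2 * t * (f n * g n) + (g n)^2)"
    by (rule ext) (simp add: power2_eq_square algebra_simps)
  moreover have "(\<lambda>n. t^2 * (f n)^2 - 2 * t * (f n * g n) + (g n)^2) sums
     (t^2 * (\<Sum>n. (f n)^2) - 2 * t * (\<Sum>n. f n * g n) + (\<Sum>n. (g n)^2))"
    by (intro sums_add sums_diff sums_mult summable_sums assms sfg)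
  ultimately have S: "(\<lambda>n. (t * f n - g n)^2) sums (t^2 * (\<Sum>n. (f n)^2) - 2 * t * (\<Sum>n. f n * g n) + (\<Sum>n. (g n)^2))"
    by simp
  show "0 \<le> t^2 * (\<Sum>n. (f n)^2) - 2 * t * (\<Sum>n. f n * g n) + (\<Sum>n. (g n)^2)"
    using sums_le[OF _ sums_zero S] by simp
  show "0 \<le> (\<Sum>n. (f n)^2)" using assms by (intro suminf_nonneg) auto
qed


lemma shift_sums:
  fixes p :: "nat \<Rightarrow> real"
  assumes "p sums s"
  shows "(\<lambda>n. if n = 0 then 0 else p (n - 1)) sums s"
proof -
  have "(\<lambda>n. (\<lambda>n. if n = 0 then 0 else p (n - 1)) (Suc n)) sums s" using assms by simp
  thus ?thesis by (subst (asm) sums_Suc_iff) simp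
qed

lemma lin_aux:
  fixes X Y z s :: real
  shows "0 \<le> z \<Longrightarrow> 4 * s \<le> Y \<Longrightarrow> X + Y = 2 * 1 + 2 * (1 - z) \<Longrightarrow> X \<le> 4 - 4 * s"
proof -
  assume "0 \<le> z" "4 * s \<le> Y" "X + Y = 2 * 1 + 2 * (1 - z)"
  hence "X + Y = 4 - 2 * z" by simp
  with \<open>0 \<le> z\<close> \<open>4 * s \<le> Y\<close> show ?thesis by linarith
qed

lemma key_ineq:
  fixes a :: "nat \<Rightarrow> real"
  assumes s1: "(\<lambda>n. (a n)^2) sums 1" and s2: "summable (\<lambda>n. (real n)^2 * (a n)^2)"
  shows "summable (\<lambda>n. a n * a (Suc n))"
    and "(\<Sum>n. a n * a (Suc n))^2 \<le> 4 * (\<Sum>n. (real n - (\<Sum>n. real n * (a n)^2))^2 * (a n)^2)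
            * (1 - (\<Sum>n. a n * a (Suc n))^2)"
    and "0 \<le> (\<Sum>n. (real n - (\<Sum>n. real n * (a n)^2))^2 * (a n)^2)"
proof -
  define \<mu> where "\<mu> = (\<Sum>n. real n * (a n)^2)"
  define V where "V = (\<Sum>n. (real n - \<mu>)^2 * (a n)^2)"
  define S where "S = (\<Sum>n. a n * a (Suc n))"
  define u where "u = (\<lambda>n. (real n - \<mu>) * a n)"
  define b where "b = (\<lambda>n. if n = 0 then 0 else a (n - 1))"
  define c where "c = (\<lambda>n. a (Suc n))"
  have sa: "summable (\<lambda>n. (a n)^2)" using s1 by (rule sums_summable)
  have suma: "(\<Sum>n. (a n)^2) = 1" using s1 by (rule sums_unique[symmetric])
  have sn: "summable (\<lambda>n. real n * (a n)^2)"
  proof (rule summable_comparison_test'[OF s2])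
    fix n
    have "real n \<le> (real n)^2" by (cases n) (auto simp: power2_eq_square)
    thus "norm (real n * (a n)^2) \<le> (real n)^2 * (a n)^2"
      by (simp add: mult_right_mono)
  qed
  have eq_u: "(\<lambda>n. (u n)^2) = (\<lambda>n. (real n)^2 * (a n)^2 - 2 * \<mu> * (real n * (a n)^2) + \<mu>^2 * (a n)^2)"
    by (rule ext) (simp add: u_def power2_eq_square algebra_simps)
  have su: "summable (\<lambda>n. (u n)^2)"
    unfolding eq_u by (intro summable_add summable_diff summable_mult s2 sn sa)
  have V_eq: "V = (\<Sum>n. (u n)^2)" unfolding V_def u_def by (simp add: power_mult_distrib)
  have V_nn: "V \<ge> 0" unfolding V_eq using su by (intro suminf_nonneg) auto
  thus "0 \<le> (\<Sum>n. (real n - (\<Sum>n. real n * (a n)^2))^2 * (a n)^2)" by (simp add: V_def \<mu>_def)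
  have bsums: "(\<lambda>n. (b n)^2) sums 1"
  proof -
    have "(\<lambda>n. (b n)^2) = (\<lambda>n. if n = 0 then 0 else (a (n - 1))^2)"
      by (rule ext) (simp add: b_def)
    thus ?thesis using shift_sums[OF s1] by simp
  qed
  have csums: "(\<lambda>n. (c n)^2) sums (1 - (a 0)^2)"
    unfolding c_def by (subst sums_Suc_iff) (simp add: s1)
  have sb: "summable (\<lambda>n. (b n)^2)" using bsums by (rule sums_summable)
  have sc: "summable (\<lambda>n. (c n)^2)" using csums by (rule sums_summable)
  have sbc: "summable (\<lambda>n. b n * c n)" by (rule cs_summable[OF sb sc])
  have eqw: "(\<lambda>n. (b n - c n)^2) = (\<lambda>n. (b n)^2 - 2 * (b n * c n) + (c n)^2)"
    by (rule ext) (simp add: power2_eq_square algebra_simps)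
  have eqw': "(\<lambda>n. (b n + c n)^2) = (\<lambda>n. (b n)^2 + 2 * (b n * c n) + (c n)^2)"
    by (rule ext) (simp add: power2_eq_square algebra_simps)
  have sw: "summable (\<lambda>n. (b n - c n)^2)"
    unfolding eqw by (intro summable_add summable_diff summable_mult sb sc sbc)
  have sw': "summable (\<lambda>n. (b n + c n)^2)"
    unfolding eqw' by (intro summable_add summable_diff summable_mult sb sc sbc)
  have wsum: "(\<Sum>n. (b n - c n)^2) + (\<Sum>n. (b n + c n)^2) = 2 * 1 + 2 * (1 - (a 0)^2)"
  proof -
    have E: "(\<lambda>n. (b n - c n)^2 + (b n + c n)^2) = (\<lambda>n. 2 * (b n)^2 + 2 * (c n)^2)"
      by (rule ext) (simp add: power2_eq_square algebra_simps)
    have A: "(\<lambda>n. 2 * (b n)^2 + 2 * (c n)^2) sums (2 * 1 + 2 * (1 - (a 0)^2))"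
      by (intro sums_add sums_mult bsums csums)
    have B: "(\<lambda>n. (b n - c n)^2 + (b n + c n)^2) sums ((\<Sum>n. (b n - c n)^2) + (\<Sum>n. (b n + c n)^2))"
      by (intro sums_add summable_sums sw sw')
    show ?thesis using sums_unique2[OF B[unfolded E] A] .
  qed
  have sac: "summable (\<lambda>n. a n * c n)" by (rule cs_summable[OF sa sc])
  thus "summable (\<lambda>n. a n * a (Suc n))" by (simp add: c_def)
  have S_eq: "S = (\<Sum>n. a n * c n)" by (simp add: S_def c_def)
  have suc: "summable (\<lambda>n. u n * c n)" by (rule cs_summable[OF su sc])
  have p_eq: "(\<lambda>m. (real (Suc m) - \<mu>) * a (Suc m) * a m) = (\<lambda>m. u m * c m + a m * c m)"
    by (rule ext) (simp add: u_def c_def algebra_simps)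
  have psums: "(\<lambda>m. (real (Suc m) - \<mu>) * a (Suc m) * a m) sums ((\<Sum>n. u n * c n) + S)"
    unfolding p_eq S_eq by (intro sums_add summable_sums suc sac)
  have ubsums: "(\<lambda>n. u n * b n) sums ((\<Sum>n. u n * c n) + S)"
  proof -
    have "(\<lambda>n. u n * b n) = (\<lambda>n. if n = 0 then 0 else (\<lambda>m. (real (Suc m) - \<mu>) * a (Suc m) * a m) (n - 1))"
      by (rule ext) (auto simp: u_def b_def)
    thus ?thesis using shift_sums[OF psums] by simp
  qed
  have uwsums: "(\<lambda>n. u n * (b n - c n)) sums S"
  proof -
    have "(\<lambda>n. u n * b n - u n * c n) sums (((\<Sum>n. u n * c n) + S) - (\<Sum>n. u n * c n))"
      by (intro sums_diff ubsums summable_sums suc)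
    thus ?thesis by (simp add: right_diff_distrib)
  qed
  have absums: "(\<lambda>n. a n * b n) sums S"
  proof -
    have "(\<lambda>n. a n * b n) = (\<lambda>n. if n = 0 then 0 else (\<lambda>m. a m * c m) (n - 1))"
      by (rule ext) (auto simp: b_def c_def)
    thus ?thesis using shift_sums[OF summable_sums[OF sac]] S_eq by simp
  qed
  have aw'sums: "(\<lambda>n. a n * (b n + c n)) sums (2 * S)"
  proof -
    have "(\<lambda>n. a n * b n + a n * c n) sums (S + S)"
      using sums_add[OF absums summable_sums[OF sac]] S_eq by simp
    thus ?thesis by (simp add: distrib_left)
  qed
  have cs1: "S^2 \<le> V * (\<Sum>n. (b n - c n)^2)"
    using cs_ineq[OF su sw] sums_unique[OF uwsums] V_eq by simp
  have cs2: "(2 * S)^2 \<le> (\<Sum>n. (b n + c n)^2)"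
    using cs_ineq[OF sa sw'] sums_unique[OF aw'sums] suma by simp
  have "(\<Sum>n. (b n - c n)^2) \<le> 4 - 4 * S^2"
  proof -
    have "(a 0)^2 \<ge> 0" by simp
    moreover have "4 * S^2 \<le> (\<Sum>n. (b n + c n)^2)" using cs2 by (simp add: power_mult_distrib)
    ultimately show ?thesis using wsum by (rule lin_aux)
  qed
  hence "V * (\<Sum>n. (b n - c n)^2) \<le> V * (4 - 4 * S^2)" using V_nn by (rule mult_left_mono)
  with cs1 show "(\<Sum>n. a n * a (Suc n))^2 \<le> 4 * (\<Sum>n. (real n - (\<Sum>n. real n * (a n)^2))^2 * (a n)^2)
            * (1 - (\<Sum>n. a n * a (Suc n))^2)"
    unfolding S_def V_def \<mu>_def by (simp add: algebra_simps)
qed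



lemma form_two:
  fixes Q :: "nat \<Rightarrow> nat \<Rightarrow> complex"
  assumes v: "v = (\<lambda>i. if i = m then x else if i = Suc m then y else 0)"
  shows "(\<Sum>i<Suc (Suc m). \<Sum>j<Suc (Suc m). cnj (v i) * Q i j * v j) =
     cnj x * Q m m * x + cnj x * Q m (Suc m) * y + cnj y * Q (Suc m) m * x + cnj y * Q (Suc m) (Suc m) * y"
proof -
  have sub: "{m, Suc m} \<subseteq> {..<Suc (Suc m)}" by auto
  have "(\<Sum>i<Suc (Suc m). \<Sum>j<Suc (Suc m). cnj (v i) * Q i j * v j) =
        (\<Sum>i\<in>{m, Suc m}. \<Sum>j<Suc (Suc m). cnj (v i) * Q i j * v j)"
    by (rule sum.mono_neutral_right[OF _ sub]) (auto simp: v)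
  also have "\<dots> = (\<Sum>i\<in>{m, Suc m}. \<Sum>j\<in>{m, Suc m}. cnj (v i) * Q i j * v j)"
    by (intro sum.cong refl sum.mono_neutral_right[OF _ sub]) (auto simp: v)
  also have "\<dots> = cnj x * Q m m * x + cnj x * Q m (Suc m) * y + cnj y * Q (Suc m) m * x + cnj y * Q (Suc m) (Suc m) * y"
    by (simp add: v)
  finally show ?thesis .
qed

lemma seed_bound:
  assumes "covariant_seed Q"
  shows "cmod (Q m (Suc m)) \<le> 1"
proof -
  define q where "q = Q m (Suc m)"
  define q' where "q' = Q (Suc m) m"
  have d: "Q m m = 1" "Q (Suc m) (Suc m) = 1" using assms by (auto simp: covariant_seed_def)
  have F: "Im (cnj x * x + cnj x * q * y + cnj y * q' * x + cnj y * y) = 0 \<and>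
           Re (cnj x * x + cnj x * q * y + cnj y * q' * x + cnj y * y) \<ge> 0" for x y
  proof -
    define v where "v = (\<lambda>i. if i = m then x else if i = Suc m then y else 0)"
    have "Im (\<Sum>i<Suc (Suc m). \<Sum>j<Suc (Suc m). cnj (v i) * Q i j * v j) = 0 \<and>
          Re (\<Sum>i<Suc (Suc m). \<Sum>j<Suc (Suc m). cnj (v i) * Q i j * v j) \<ge> 0"
      using assms unfolding covariant_seed_def by blast
    thus ?thesis unfolding form_two[OF v_def] d q_def q'_def by simp
  qed
  have h1: "Im q + Im q' = 0" using conjunct1[OF F[of 1 1]] by simp
  have h2: "Re q - Re q' = 0" using conjunct1[OF F[of 1 "\<i>"]] by simp
  have q'eq: "q' = cnj q" using h1 h2 by (simp add: complex_eq_iff)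
  show ?thesis
  proof (cases "q = 0")
    case True thus ?thesis by (simp add: q_def)
  next
    case False
    have "Re (cnj (of_real (cmod q)) * of_real (cmod q) + cnj (of_real (cmod q)) * q * (- cnj q)
              + cnj (- cnj q) * q' * of_real (cmod q) + cnj (- cnj q) * (- cnj q)) \<ge> 0"
      using conjunct2[OF F] by blast
    hence A: "Im q * (Im q * (cmod q * 2)) + Re q * (Re q * (cmod q * 2))
          \<le> Im q * Im q + (Re q * Re q + cmod q * cmod q)"
      unfolding q'eq by (simp add: complex_mult_cnj cmod_power2 power2_eq_square power3_eq_cube algebra_simps)
    have nq: "Re q * Re q + Im q * Im q = cmod q * cmod q"
      using cmod_power2[of q] by (simp add: power2_eq_square)
    have "Im q * (Im q * (cmod q * 2)) + Re q * (Re q * (cmod q * 2)) = 2 * cmod q * (Re q * Re q + Im q * Im q)"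
      by (simp add: algebra_simps)
    with A nq have "2 * cmod q * (cmod q * cmod q) \<le> 2 * (cmod q * cmod q)" by simp
    hence "(cmod q)^2 * (cmod q) \<le> (cmod q)^2 * 1" by (simp add: power2_eq_square algebra_simps)
    moreover have "(cmod q)^2 > 0" using False by simp
    ultimately show ?thesis unfolding q_def[symmetric] by (simp add: mult_le_cancel_left_pos)
  qed
qed



lemma cis_dist_sq: "(cmod (cis t - E))^2 = 1 + (cmod E)^2 - 2 * Re (cnj E * cis t)"
proof -
  have "(cmod (cis t - E))^2 = (cos t - Re E)^2 + (sin t - Im E)^2"
    by (simp add: cmod_power2)
  also have "\<dots> = ((cos t)^2 + (sin t)^2) + ((Re E)^2 + (Im E)^2) - 2 * (Re E * cos t + Im E * sin t)"
    by (simp add: power2_eq_square algebra_simps)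
  also have "\<dots> = 1 + (cmod E)^2 - 2 * Re (cnj E * cis t)"
    by (simp add: cmod_power2)
  finally show ?thesis .
qed

lemma phase_facts:
  assumes "phase_outcome_dist c Q P"
  shows "(\<lambda>m. cnj (c m) * Q m (Suc m) * c (Suc m)) sums phase_mean P"
    and "phase_disp P = 1 - (cmod (phase_mean P))^2"
proof -
  have em: "emeasure P (space P) = 1" and sP: "sets P = sets (borel :: real measure)"
    and F: "\<And>k::nat. (\<lambda>m. cnj (c m) * Q m (m + k) * c (m + k)) sums (integral\<^sup>L P (\<lambda>\<phi>. cis (real k * \<phi>)))"
    using assms unfolding phase_outcome_dist_def by blast+
  show "(\<lambda>m. cnj (c m) * Q m (Suc m) * c (Suc m)) sums phase_mean P"
    using F[of 1] by (simp add: phase_mean_def)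
  interpret finite_measure P by (rule finite_measureI) (simp add: em)
  have mP: "measure P (space P) = 1" using em by (simp add: measure_def)
  have cm: "(\<lambda>\<phi>. cis \<phi>) \<in> borel_measurable P"
    unfolding measurable_cong_sets[OF sP refl]
    by (intro borel_measurable_continuous_onI continuous_intros)
  have ic: "integrable P (\<lambda>\<phi>. cis \<phi>)"
    by (rule integrable_const_bound[where B=1]) (simp_all add: cm)
  define E where "E = phase_mean P"
  have icE: "integrable P (\<lambda>\<phi>. cnj E * cis \<phi>)" using ic by simp
  have iR: "integrable P (\<lambda>\<phi>. Re (cnj E * cis \<phi>))" using icE by (rule integrable_Re)
  have "phase_disp P = integral\<^sup>L P (\<lambda>\<phi>. (1 + (cmod E)^2) - 2 * Re (cnj E * cis \<phi>))"
    unfolding phase_disp_def E_def[symmetric] cis_dist_sq ..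
  also have "\<dots> = integral\<^sup>L P (\<lambda>\<phi>. (1 + (cmod E)^2)) - integral\<^sup>L P (\<lambda>\<phi>. 2 * Re (cnj E * cis \<phi>))"
    by (rule Bochner_Integration.integral_diff) (simp, rule integrable_mult_right[OF iR])
  also have "integral\<^sup>L P (\<lambda>\<phi>. 2 * Re (cnj E * cis \<phi>)) = 2 * integral\<^sup>L P (\<lambda>\<phi>. Re (cnj E * cis \<phi>))"
    by (rule Bochner_Integration.integral_mult_right) (rule iR)
  also have "integral\<^sup>L P (\<lambda>\<phi>. Re (cnj E * cis \<phi>)) = Re (integral\<^sup>L P (\<lambda>\<phi>. cnj E * cis \<phi>))"
    by (rule integral_Re) (rule icE)
  also have "integral\<^sup>L P (\<lambda>\<phi>. cnj E * cis \<phi>) = cnj E * integral\<^sup>L P (\<lambda>\<phi>. cis \<phi>)"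
    by (rule Bochner_Integration.integral_mult_right) (rule ic)
  also have "integral\<^sup>L P (\<lambda>\<phi>. cis \<phi>) = E" by (simp add: E_def phase_mean_def)
  also have "integral\<^sup>L P (\<lambda>\<phi>. (1 + (cmod E)^2)) = 1 + (cmod E)^2" by (simp add: mP)
  also have "(1 + (cmod E)^2) - 2 * Re (cnj E * E) = 1 - (cmod E)^2"
  proof -
    have "cnj E * E = of_real ((cmod E)^2)" using complex_norm_square[of E] by (simp add: mult.commute)
    thus ?thesis by simp
  qed
  finally show "phase_disp P = 1 - (cmod (phase_mean P))^2" by (simp add: E_def)
qed


lemma single_bound:
  assumes st: "is_state c" and sd: "covariant_seed Q" and pd: "phase_outcome_dist c Q P"
    and nz: "phase_mean P \<noteq> 0"
  shows "phase_unc P * num_unc c \<ge> 1 / 2"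
proof -
  define a where "a = (\<lambda>n. cmod (c n))"
  have s1: "(\<lambda>n. (a n)^2) sums 1" and s2: "summable (\<lambda>n. (real n)^2 * (a n)^2)"
    using st unfolding is_state_def a_def by blast+
  define S where "S = (\<Sum>n. a n * a (Suc n))"
  define V where "V = (\<Sum>n. (real n - (\<Sum>n. real n * (a n)^2))^2 * (a n)^2)"
  have sS: "summable (\<lambda>n. a n * a (Suc n))" by (rule key_ineq(1)[OF s1 s2])
  have ki: "S^2 \<le> 4 * V * (1 - S^2)" unfolding S_def V_def by (rule key_ineq(2)[OF s1 s2])
  have V_eq: "num_unc c = sqrt V" by (simp add: num_unc_def num_mean_def V_def a_def)
  have V_nn: "V \<ge> 0" unfolding V_def by (rule key_ineq(3)[OF s1 s2])
  define E where "E = phase_mean P"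
  have Es: "(\<lambda>m. cnj (c m) * Q m (Suc m) * c (Suc m)) sums E"
    unfolding E_def by (rule phase_facts(1)[OF pd])
  have tb: "norm (cnj (c m) * Q m (Suc m) * c (Suc m)) \<le> a m * a (Suc m)" for m
  proof -
    have "norm (cnj (c m) * Q m (Suc m) * c (Suc m)) = a m * cmod (Q m (Suc m)) * a (Suc m)"
      by (simp add: a_def norm_mult)
    also have "\<dots> \<le> a m * 1 * a (Suc m)"
      using seed_bound[OF sd, of m] by (intro mult_right_mono mult_left_mono) (auto simp: a_def)
    finally show ?thesis by simp
  qed
  have sN: "summable (\<lambda>m. norm (cnj (c m) * Q m (Suc m) * c (Suc m)))"
    by (rule summable_comparison_test'[OF sS]) (simp add: tb)
  have "cmod E \<le> (\<Sum>m. norm (cnj (c m) * Q m (Suc m) * c (Suc m)))"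
    using summable_norm[OF sN] sums_unique[OF Es] by simp
  also have "\<dots> \<le> S" unfolding S_def by (rule suminf_le[OF tb sN sS])
  finally have ES: "cmod E \<le> S" .
  have Epos: "cmod E > 0" using nz by (simp add: E_def)
  define e where "e = (cmod E)^2"
  have e_pos: "e > 0" using Epos by (simp add: e_def)
  have eS: "e \<le> S^2" unfolding e_def using ES Epos by (intro power_mono) auto
  have "0 < S^2" using e_pos eS by linarith
  hence "0 < 4 * V * (1 - S^2)" using ki by linarith
  have "e \<le> 4 * V * (1 - S^2)" using eS ki by linarith
  also have "\<dots> \<le> 4 * V * (1 - e)" using eS V_nn by (intro mult_left_mono) auto
  finally have main: "e \<le> 4 * V * (1 - e)" .
  have disp: "phase_disp P = 1 - e" using phase_facts(2)[OF pd] by (simp add: e_def E_def)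
  have "phase_unc P * num_unc c = sqrt ((1 - e) / e * V)"
    by (simp add: phase_unc_def disp V_eq e_def[symmetric] E_def[symmetric] real_sqrt_mult[symmetric])
  also have "\<dots> \<ge> sqrt (1/4)"
  proof (rule real_sqrt_le_mono)
    show "1/4 \<le> (1 - e) / e * V" using main e_pos by (simp add: field_simps)
  qed
  finally show ?thesis by (simp add: real_sqrt_divide)
qed

theorem theorem4:
  fixes c1 c2 :: "nat \<Rightarrow> complex"
    and Q1 Q2 :: "nat \<Rightarrow> nat \<Rightarrow> complex"
    and P1 P2 :: "real measure"
  assumes "is_state c1" and "is_state c2"
    and "covariant_seed Q1" and "covariant_seed Q2"
    and "phase_outcome_dist c1 Q1 P1" and "phase_outcome_dist c2 Q2 P2"
    and "phase_mean P1 \<noteq> 0" and "phase_mean P2 \<noteq> 0"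
  shows "tanh (phase_unc P1 * num_unc c1 + phase_unc P2 * num_unc c2)
           + phase_unc P1 * num_unc c1 \<ge> tanh 1 + 1 / 2"
proof -
  have h1: "phase_unc P1 * num_unc c1 \<ge> 1 / 2"
    using single_bound assms(1,3,5,7) by blast
  have h2: "phase_unc P2 * num_unc c2 \<ge> 1 / 2"
    using single_bound assms(2,4,6,8) by blast
  have "tanh 1 \<le> tanh (phase_unc P1 * num_unc c1 + phase_unc P2 * num_unc c2)"
    using h1 h2 by simp
  with h1 show ?thesis by linarith
qed

end
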